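(* Let $p$ be an odd prime, $r\ge3$ with $p\nmid r$, let $V_1=\mathbb{Z}_p^{d_1}$, $V_2=\mathbb{Z}_p^{d_2}$, and let $G=(V_1\times V_2)\rtimes_{(\psi_1,\psi_2)}\mathrm{D}_{2r}$, where $\psi_i:\mathrm{D}_{2r}\to\mathrm{GL}(V_i)$ is irreducible over $\mathbb{F}_p$ for $i=1,2$. If $G$ has a rotary pair $(\rho,\tau)$ with $|\rho|=2p$ and $|\tau|=2$, then $\psi_1\not\cong\psi_2$.
   Context: A rotary pair of $G$ is $(\rho,\tau)\in G\times G$ with $G=\langle\rho,\tau\rangle$ and $|\tau|=2$. $(V_1\times V_2)\rtimes_{(\psi_1,\psi_2)}\mathrm{D}_{2r}$ is the semidirect product in which $\mathrm{D}_{2r}$ acts on $V_i=\mathbb{F}_p^{d_i}$ via $\psi_i$ componentwise. *)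

theory Defs
  imports "HOL-Analysis.Analysis" "HOL-Algebra.Multiplicative_Group" "HOL-Algebra.Generated_Groups"
begin

text \<open>Dihedral group of order 2r: element (a, e) stands for rho^a sigma^e with
  a < r, sigma rho sigma = rho^-1.\<close>
definition dihedral :: "nat \<Rightarrow> (nat \<times> bool) monoid" where
  "dihedral r = \<lparr> carrier = {0..<r} \<times> UNIV,
     mult = (\<lambda>(a, e) (b, f). ((if e then a + (r - b) else a + b) mod r, e \<noteq> f)),
     one = (0, False) \<rparr>"

definition dihedral_rep :: "nat \<Rightarrow> (nat \<times> bool \<Rightarrow> 'k::field ^'n ^'n) \<Rightarrow> bool" where
  "dihedral_rep r \<psi> \<longleftrightarrow> \<psi> \<one>\<^bsub>dihedral r\<^esub> = mat 1 \<and>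
     (\<forall>g\<in>carrier (dihedral r). \<forall>h\<in>carrier (dihedral r).
        \<psi> (g \<otimes>\<^bsub>dihedral r\<^esub> h) = \<psi> g ** \<psi> h)"

definition k_subspace :: "('k::field ^'n) set \<Rightarrow> bool" where
  "k_subspace W \<longleftrightarrow> 0 \<in> W \<and> (\<forall>v\<in>W. \<forall>w\<in>W. v + w \<in> W) \<and> (\<forall>c. \<forall>v\<in>W. c *s v \<in> W)"

definition irreducible_rep :: "nat \<Rightarrow> (nat \<times> bool \<Rightarrow> 'k::field ^'n ^'n) \<Rightarrow> bool" where
  "irreducible_rep r \<psi> \<longleftrightarrow> dihedral_rep r \<psi> \<and> (\<exists>v::'k^'n. v \<noteq> 0) \<and>
     (\<forall>W. k_subspace W \<and> (\<forall>g\<in>carrier (dihedral r). \<forall>v\<in>W. \<psi> g *v v \<in> W)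
          \<longrightarrow> W = {0} \<or> W = UNIV)"

definition rep_iso :: "nat \<Rightarrow> (nat \<times> bool \<Rightarrow> 'k::field ^'n1 ^'n1) \<Rightarrow> (nat \<times> bool \<Rightarrow> 'k ^'n2 ^'n2) \<Rightarrow> bool" where
  "rep_iso r \<psi>1 \<psi>2 \<longleftrightarrow> (\<exists>(T::'k^'n1^'n2) (S::'k^'n2^'n1). T ** S = mat 1 \<and> S ** T = mat 1 \<and>
     (\<forall>g\<in>carrier (dihedral r). T ** \<psi>1 g = \<psi>2 g ** T))"

definition semidirect :: "nat \<Rightarrow> (nat \<times> bool \<Rightarrow> 'k::field ^'n1 ^'n1) \<Rightarrow> (nat \<times> bool \<Rightarrow> 'k ^'n2 ^'n2)
    \<Rightarrow> (('k^'n1) \<times> ('k^'n2) \<times> (nat \<times> bool)) monoid" where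
  "semidirect r \<psi>1 \<psi>2 = \<lparr> carrier = UNIV \<times> UNIV \<times> carrier (dihedral r),
     mult = (\<lambda>(v1, v2, g) (w1, w2, h). (v1 + \<psi>1 g *v w1, v2 + \<psi>2 g *v w2, g \<otimes>\<^bsub>dihedral r\<^esub> h)),
     one = (0, 0, \<one>\<^bsub>dihedral r\<^esub>) \<rparr>"

definition rotary_pair :: "('a, 'b) monoid_scheme \<Rightarrow> 'a \<Rightarrow> 'a \<Rightarrow> bool" where
  "rotary_pair G \<rho> \<tau> \<longleftrightarrow> \<rho> \<in> carrier G \<and> \<tau> \<in> carrier G \<and>
     generate G {\<rho>, \<tau>} = carrier G \<and> group.ord G \<tau> = 2"

end

theory Submission
  imports Defs "HOL-Number_Theory.Residues"
begin

lemma dmult: "(a, e) \<otimes>\<^bsub>dihedral r\<^esub> (b, f) = ((if e then a + (r - b) else a + b) mod r, e \<noteq> f)"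
  by (simp add: dihedral_def)

lemma d_one: "\<one>\<^bsub>dihedral r\<^esub> = (0, False)"
  by (simp add: dihedral_def)

lemma dcarrier: "carrier (dihedral r) = {0..<r} \<times> UNIV"
  by (simp add: dihedral_def)

lemma int_dm: "b \<le> r \<Longrightarrow> int (fst ((a, e) \<otimes>\<^bsub>dihedral r\<^esub> (b, f))) = (if e then int a - int b else int a + int b) mod int r"
proof -
  assume "b \<le> r"
  have "int ((if e then a + (r - b) else a + b) mod r) = (if e then int a + int r - int b else int a + int b) mod int r"
    using \<open>b \<le> r\<close> by (simp add: zmod_int of_nat_diff)
  also have "\<dots> = (if e then int a - int b else int a + int b) mod int r"
  proof -
    have "int a + int r - int b = (int a - int b) + int r" by simp
    then show ?thesis by (cases e) (simp_all only: if_True if_False mod_add_self2)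
  qed
  finally show ?thesis by (simp add: dmult)
qed

lemma int_assoc_aux: "((if e \<noteq> f then (if e then A - B else A + B) mod R - C else (if e then A - B else A + B) mod R + C)) mod (R::int)
  = (if e then A - (if f then B - C else B + C) mod R else A + (if f then B - C else B + C) mod R) mod R"
  by (cases e; cases f; simp add: mod_add_left_eq mod_diff_left_eq mod_add_right_eq mod_diff_right_eq algebra_simps)

lemma dihedral_group: assumes "r > 0" shows "group (dihedral r)"
proof (rule groupI)
  fix x y assume "x \<in> carrier (dihedral r)" "y \<in> carrier (dihedral r)"
  then show "x \<otimes>\<^bsub>dihedral r\<^esub> y \<in> carrier (dihedral r)"
    using assms by (cases x, cases y) (simp add: dmult dcarrier)
next
  show "\<one>\<^bsub>dihedral r\<^esub> \<in> carrier (dihedral r)" using assms by (simp add: d_one dcarrier)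
next
  fix x y z assume xyz: "x \<in> carrier (dihedral r)" "y \<in> carrier (dihedral r)" "z \<in> carrier (dihedral r)"
  obtain a e where x: "x = (a, e)" by (cases x)
  obtain b f where y: "y = (b, f)" by (cases y)
  obtain c g where z: "z = (c, g)" by (cases z)
  have abc: "a < r" "b < r" "c < r" using xyz x y z by (auto simp: dcarrier)
  define m1 where "m1 = fst ((a, e) \<otimes>\<^bsub>dihedral r\<^esub> (b, f))"
  define m2 where "m2 = fst ((b, f) \<otimes>\<^bsub>dihedral r\<^esub> (c, g))"
  have xy: "x \<otimes>\<^bsub>dihedral r\<^esub> y = (m1, e \<noteq> f)" unfolding m1_def x y by (simp add: dmult)
  have yz: "y \<otimes>\<^bsub>dihedral r\<^esub> z = (m2, f \<noteq> g)" unfolding m2_def y z by (simp add: dmult)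
  have m2r: "m2 \<le> r" unfolding m2_def using assms by (simp add: dmult less_imp_le)
  have eqi: "int (fst ((m1, e \<noteq> f) \<otimes>\<^bsub>dihedral r\<^esub> (c, g))) = int (fst ((a, e) \<otimes>\<^bsub>dihedral r\<^esub> (m2, f \<noteq> g)))"
    apply (simp only: int_dm abc(3)[THEN less_imp_le] m2r)
    apply (simp only: m1_def m2_def int_dm abc[THEN less_imp_le])
    by (rule int_assoc_aux)
  show "x \<otimes>\<^bsub>dihedral r\<^esub> y \<otimes>\<^bsub>dihedral r\<^esub> z = x \<otimes>\<^bsub>dihedral r\<^esub> (y \<otimes>\<^bsub>dihedral r\<^esub> z)"
  proof -
    have f1: "fst ((m1, e \<noteq> f) \<otimes>\<^bsub>dihedral r\<^esub> (c, g)) = fst ((a, e) \<otimes>\<^bsub>dihedral r\<^esub> (m2, f \<noteq> g))"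
      using eqi by (simp only: of_nat_eq_iff)
    have f2: "snd ((m1, e \<noteq> f) \<otimes>\<^bsub>dihedral r\<^esub> (c, g)) = snd ((a, e) \<otimes>\<^bsub>dihedral r\<^esub> (m2, f \<noteq> g))"
      by (simp only: dmult snd_conv) blast
    have "(m1, e \<noteq> f) \<otimes>\<^bsub>dihedral r\<^esub> (c, g) = (a, e) \<otimes>\<^bsub>dihedral r\<^esub> (m2, f \<noteq> g)"
      using f1 f2 by (simp only: prod_eq_iff)
    then show ?thesis by (simp only: xy yz x[symmetric] z[symmetric])
  qed
next
  fix x assume "x \<in> carrier (dihedral r)"
  then show "\<one>\<^bsub>dihedral r\<^esub> \<otimes>\<^bsub>dihedral r\<^esub> x = x"
    by (cases x) (simp add: dmult d_one dcarrier)
next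
  fix x assume x: "x \<in> carrier (dihedral r)"
  obtain a e where xe: "x = (a, e)" by (cases x)
  have ar: "a < r" using x xe by (simp add: dcarrier)
  show "\<exists>y\<in>carrier (dihedral r). y \<otimes>\<^bsub>dihedral r\<^esub> x = \<one>\<^bsub>dihedral r\<^esub>"
  proof (cases e)
    case True
    have "(a + (r - a)) mod r = 0" using ar by simp
    then show ?thesis using xe ar True by (intro bexI[of _ "(a, True)"]) (simp_all add: dmult d_one dcarrier)
  next
    case False
    have "((r - a) mod r + a) mod r = 0" using ar by (simp add: mod_add_left_eq)
    then show ?thesis using xe assms False
      by (intro bexI[of _ "((r - a) mod r, False)"]) (simp_all add: dmult d_one dcarrier)
  qed
qed

lemma card_D: "card (carrier (dihedral r)) = 2 * r"
  by (simp add: dcarrier card_cartesian_product)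

lemma rot_succ: "Suc k < r \<Longrightarrow> (1, False) \<otimes>\<^bsub>dihedral r\<^esub> (k, False) = (Suc k, False)"
  by (simp add: dmult)

lemma refl_decomp: "k < r \<Longrightarrow> c < r \<Longrightarrow> (k, True) = ((k + r - c) mod r, False) \<otimes>\<^bsub>dihedral r\<^esub> (c, True)"
proof -
  assume "k < r" "c < r"
  have "((k + r - c) mod r + c) mod r = (k + r - c + c) mod r" by (simp add: mod_add_left_eq)
  also have "\<dots> = k" using \<open>k < r\<close> \<open>c < r\<close> by simp
  finally show ?thesis by (simp add: dmult)
qed

lemma x_comm: assumes "g \<in> carrier (dihedral r)" "2 \<le> r"
  shows "(1, False) \<otimes>\<^bsub>dihedral r\<^esub> g = g \<otimes>\<^bsub>dihedral r\<^esub> (if snd g then (r - 1, False) else (1, False))"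
    and "(r - 1, False) \<otimes>\<^bsub>dihedral r\<^esub> g = g \<otimes>\<^bsub>dihedral r\<^esub> (if snd g then (1, False) else (r - 1, False))"
proof -
  obtain b f where g: "g = (b, f)" by (cases g)
  have "b < r" using assms g by (simp add: dcarrier)
  show "(1, False) \<otimes>\<^bsub>dihedral r\<^esub> g = g \<otimes>\<^bsub>dihedral r\<^esub> (if snd g then (r - 1, False) else (1, False))"
    using assms by (cases f) (simp_all add: g dmult add.commute)
  show "(r - 1, False) \<otimes>\<^bsub>dihedral r\<^esub> g = g \<otimes>\<^bsub>dihedral r\<^esub> (if snd g then (1, False) else (r - 1, False))"
    using assms by (cases f) (simp_all add: g dmult add.commute)
qed

lemma x_inv: "2 \<le> r \<Longrightarrow> (1, False) \<otimes>\<^bsub>dihedral r\<^esub> (r - 1, False) = (0, False)"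
   "2 \<le> r \<Longrightarrow> (r - 1, False) \<otimes>\<^bsub>dihedral r\<^esub> (1, False) = (0, False)"
  by (simp_all add: dmult)

lemma rep_mult: "dihedral_rep r \<psi> \<Longrightarrow> g \<in> carrier (dihedral r) \<Longrightarrow> h \<in> carrier (dihedral r) \<Longrightarrow>
   \<psi> g *v (\<psi> h *v v) = \<psi> (g \<otimes>\<^bsub>dihedral r\<^esub> h) *v v"
  by (simp add: dihedral_rep_def matrix_vector_mul_assoc)

lemma rep_one: "dihedral_rep r \<psi> \<Longrightarrow> \<psi> (0, False) *v v = v"
  by (simp add: dihedral_rep_def d_one)

lemma rep_invol: "dihedral_rep r \<psi> \<Longrightarrow> g \<in> carrier (dihedral r) \<Longrightarrow> g \<otimes>\<^bsub>dihedral r\<^esub> g = (0, False) \<Longrightarrow>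
   \<psi> g *v (\<psi> g *v v) = v"
  by (simp add: rep_mult rep_one)

definition intw :: "nat \<Rightarrow> (nat \<times> bool \<Rightarrow> 'k::field ^'n ^'n) \<Rightarrow> ('k^'n \<Rightarrow> 'k^'n) \<Rightarrow> bool" where
  "intw r \<psi> f \<longleftrightarrow> (\<forall>v w. f (v + w) = f v + f w) \<and> (\<forall>c v. f (c *s v) = c *s f v) \<and>
     (\<forall>g\<in>carrier (dihedral r). \<forall>v. f (\<psi> g *v v) = \<psi> g *v f v)"

lemma intw_add: "intw r \<psi> f \<Longrightarrow> f (v + w) = f v + f w" by (simp add: intw_def)
lemma intw_smult: "intw r \<psi> f \<Longrightarrow> f (c *s v) = c *s f v" by (simp add: intw_def)
lemma intw_comm: "intw r \<psi> f \<Longrightarrow> g \<in> carrier (dihedral r) \<Longrightarrow> f (\<psi> g *v v) = \<psi> g *v f v" by (simp add: intw_def)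
lemma intw_zero: "intw r \<psi> f \<Longrightarrow> f 0 = 0"
  using intw_smult[of r \<psi> f 0 0] by simp
lemma intw_neg: "intw r \<psi> f \<Longrightarrow> f (- v) = - f v"
  using intw_smult[of r \<psi> f "-1" v] by (simp add: vector_sneg_minus1[symmetric])
lemma intw_diff: "intw r \<psi> f \<Longrightarrow> f (v - w) = f v - f w"
  using intw_add[of r \<psi> f v "- w"] intw_neg[of r \<psi> f w] by simp

lemma intw_id: "intw r \<psi> (\<lambda>v. v)" by (simp add: intw_def)
lemma intw_0: "intw r \<psi> (\<lambda>v. 0)" by (simp add: intw_def)
lemma intw_plus: "intw r \<psi> f \<Longrightarrow> intw r \<psi> g \<Longrightarrow> intw r \<psi> (\<lambda>v. f v + g v)"
  by (simp add: intw_def matrix_vector_right_distrib vector_add_ldistrib algebra_simps)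
lemma intw_comp: "intw r \<psi> f \<Longrightarrow> intw r \<psi> g \<Longrightarrow> intw r \<psi> (\<lambda>v. f (g v))"
  by (simp add: intw_def)
lemma intw_scale: "intw r \<psi> f \<Longrightarrow> intw r \<psi> (\<lambda>v. c *s f v)"
  by (simp add: intw_def vector_add_ldistrib vector_smult_assoc vector_scalar_commute mult.commute)
lemma intw_uminus: "intw r \<psi> f \<Longrightarrow> intw r \<psi> (\<lambda>v. - f v)"
  using intw_scale[of r \<psi> f "-1"] by (simp add: vector_sneg_minus1[symmetric])

lemma intw_C: assumes "dihedral_rep r \<psi>" "2 \<le> r"
  shows "intw r \<psi> (\<lambda>v. \<psi> (1, False) *v v + \<psi> (r - 1, False) *v v)"
  unfolding intw_def
proof (intro conjI allI ballI)
  fix v w show "\<psi> (1, False) *v (v + w) + \<psi> (r - 1, False) *v (v + w) =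
    \<psi> (1, False) *v v + \<psi> (r - 1, False) *v v + (\<psi> (1, False) *v w + \<psi> (r - 1, False) *v w)"
    by (simp add: matrix_vector_right_distrib algebra_simps)
next
  fix c v show "\<psi> (1, False) *v (c *s v) + \<psi> (r - 1, False) *v (c *s v) =
     c *s (\<psi> (1, False) *v v + \<psi> (r - 1, False) *v v)"
    by (simp add: vector_scalar_commute vector_add_ldistrib)
next
  fix g v assume g: "g \<in> carrier (dihedral r)"
  have c1: "(1, False) \<in> carrier (dihedral r)" "(r - 1, False) \<in> carrier (dihedral r)"
    using assms by (auto simp: dcarrier)
  show "\<psi> (1, False) *v (\<psi> g *v v) + \<psi> (r - 1, False) *v (\<psi> g *v v) =
         \<psi> g *v (\<psi> (1, False) *v v + \<psi> (r - 1, False) *v v)"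
    using assms g c1 x_comm[OF g assms(2)]
    by (cases "snd g") (simp_all add: rep_mult matrix_vector_right_distrib add.commute)
qed

lemma inv_from_xs:
  assumes rep: "dihedral_rep r \<psi>" and r2: "2 \<le> r" and c: "c < r"
    and hx: "\<forall>v\<in>W. \<psi> (1, False) *v v \<in> W" and hs: "\<forall>v\<in>W. \<psi> (c, True) *v v \<in> W"
  shows "\<forall>g\<in>carrier (dihedral r). \<forall>v\<in>W. \<psi> g *v v \<in> W"
proof -
  have rot: "\<forall>v\<in>W. \<psi> (k, False) *v v \<in> W" if "k < r" for k
    using that
  proof (induction k)
    case 0 then show ?case using rep by (simp add: rep_one)
  next
    case (Suc k)
    have c1: "(1, False) \<in> carrier (dihedral r)" "(k, False) \<in> carrier (dihedral r)"
      using r2 Suc.prems by (auto simp: dcarrier)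
    show ?case
    proof
      fix v assume v: "v \<in> W"
      have "\<psi> (Suc k, False) *v v = \<psi> (1, False) *v (\<psi> (k, False) *v v)"
        using rot_succ[OF Suc.prems] by (simp only: rep_mult[OF rep c1])
      then show "\<psi> (Suc k, False) *v v \<in> W" using Suc v hx by simp
    qed
  qed
  show ?thesis
  proof (intro ballI)
    fix g v assume g: "g \<in> carrier (dihedral r)" and v: "v \<in> W"
    obtain k e where ge: "g = (k, e)" by (cases g)
    have k: "k < r" using g ge by (simp add: dcarrier)
    show "\<psi> g *v v \<in> W"
    proof (cases e)
      case False then show ?thesis using rot k v ge by simp
    next
      case True
      have c1: "((k + r - c) mod r, False) \<in> carrier (dihedral r)" "(c, True) \<in> carrier (dihedral r)"
        using r2 c by (auto simp: dcarrier)
      have "\<psi> g *v v = \<psi> ((k + r - c) mod r, False) *v (\<psi> (c, True) *v v)"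
        using rep c1 k c True ge by (simp add: rep_mult refl_decomp[symmetric])
      then show ?thesis using rot[of "(k + r - c) mod r"] hs v r2 by simp
    qed
  qed
qed


lemma lemmaE:
  fixes \<psi> :: "nat \<times> bool \<Rightarrow> 'k::field^'n^'n"
  assumes irr: "irreducible_rep r \<psi>" and r2: "2 \<le> r" and c: "c < r"
    and two: "(2::'k) \<noteq> 0" and eps: "\<epsilon> = 1 \<or> \<epsilon> = -1"
    and sa: "\<psi> (c, True) *v a = \<epsilon> *s a" and sb: "\<psi> (c, True) *v b = \<epsilon> *s b" and a0: "a \<noteq> 0"
  shows "\<exists>R. intw r \<psi> R \<and> b = R a"
proof -
  have rep: "dihedral_rep r \<psi>" using irr by (simp add: irreducible_rep_def)
  define X where "X = \<psi> (1, False)"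
  define Y where "Y = \<psi> (r - 1, False)"
  define S where "S = \<psi> (c, True)"
  define C where "C = (\<lambda>v. X *v v + Y *v v)"
  have iC: "intw r \<psi> C" using intw_C[OF rep r2] by (simp add: C_def X_def Y_def)
  have cx: "(1, False) \<in> carrier (dihedral r)" "(r - 1, False) \<in> carrier (dihedral r)" "(c, True) \<in> carrier (dihedral r)"
    using r2 c by (auto simp: dcarrier)
  have YX: "Y *v (X *v v) = v" for v
    unfolding X_def Y_def using rep_mult[OF rep cx(2) cx(1)] x_inv(2)[OF r2] rep_one[OF rep] by simp
  have sX: "S *v (X *v v) = Y *v (S *v v)" for v
  proof -
    have "(r - 1, False) \<otimes>\<^bsub>dihedral r\<^esub> (c, True) = (c, True) \<otimes>\<^bsub>dihedral r\<^esub> (1, False)"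
      using x_comm(2)[OF cx(3) r2] by simp
    then show ?thesis unfolding S_def X_def Y_def
      using rep_mult[OF rep cx(3) cx(1)] rep_mult[OF rep cx(2) cx(3)] by simp
  qed
  have XX: "X *v (X *v v) = C (X *v v) - v" for v
    unfolding C_def using YX by simp
  have Ye: "Y *v v = C v - X *v v" for v unfolding C_def by simp
  have ee: "\<epsilon> * \<epsilon> = 1" using eps by auto
  have sQ: "S *v (Q a + Q' (X *v a)) = \<epsilon> *s Q a + \<epsilon> *s Q' (Y *v a)"
    if iQ: "intw r \<psi> Q" and iQ': "intw r \<psi> Q'" for Q Q'
  proof -
    have "S *v (Q a + Q' (X *v a)) = Q (S *v a) + Q' (S *v (X *v a))"
      using intw_comm[OF iQ cx(3)] intw_comm[OF iQ' cx(3)] by (simp add: S_def matrix_vector_right_distrib)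
    also have "\<dots> = \<epsilon> *s Q a + \<epsilon> *s Q' (Y *v a)"
      using sX sa intw_smult[OF iQ] intw_smult[OF iQ'] by (simp add: S_def vector_scalar_commute)
    finally show ?thesis .
  qed
  define W where "W = {Q a + Q' (X *v a) | Q Q'. intw r \<psi> Q \<and> intw r \<psi> Q'}"
  have memW: "v \<in> W" if "intw r \<psi> Q" "intw r \<psi> Q'" "v = Q a + Q' (X *v a)" for v Q Q'
    unfolding W_def using that by blast
  have sub: "k_subspace W"
    unfolding k_subspace_def
  proof (intro conjI ballI allI)
    show "0 \<in> W" by (rule memW[OF intw_0 intw_0]) simp
  next
    fix v w assume "v \<in> W" "w \<in> W"
    then obtain Q1 Q1' Q2 Q2' where q: "intw r \<psi> Q1" "intw r \<psi> Q1'" "intw r \<psi> Q2" "intw r \<psi> Q2'"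
      and vw: "v = Q1 a + Q1' (X *v a)" "w = Q2 a + Q2' (X *v a)" unfolding W_def by blast
    show "v + w \<in> W" by (rule memW[OF intw_plus[OF q(1) q(3)] intw_plus[OF q(2) q(4)]]) (simp add: vw algebra_simps)
  next
    fix d v assume "v \<in> W"
    then obtain Q1 Q1' where q: "intw r \<psi> Q1" "intw r \<psi> Q1'"
      and vw: "v = Q1 a + Q1' (X *v a)" unfolding W_def by blast
    show "d *s v \<in> W" by (rule memW[OF intw_scale[OF q(1)] intw_scale[OF q(2)]]) (simp add: vw vector_add_ldistrib)
  qed
  have invX: "\<forall>v\<in>W. \<psi> (1, False) *v v \<in> W"
  proof
    fix v assume "v \<in> W"
    then obtain Q1 Q1' where q: "intw r \<psi> Q1" "intw r \<psi> Q1'"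
      and vw: "v = Q1 a + Q1' (X *v a)" unfolding W_def by blast
    have "X *v v = Q1 (X *v a) + Q1' (X *v (X *v a))"
      using vw intw_comm[OF q(1) cx(1)] intw_comm[OF q(2) cx(1)] by (simp add: X_def matrix_vector_right_distrib)
    also have "\<dots> = (\<lambda>z. - Q1' z) a + (\<lambda>z. Q1 z + Q1' (C z)) (X *v a)"
      using XX intw_diff[OF q(2)] by simp
    finally have "X *v v = (\<lambda>z. - Q1' z) a + (\<lambda>z. Q1 z + Q1' (C z)) (X *v a)" .
    then show "\<psi> (1, False) *v v \<in> W" unfolding X_def[symmetric]
      by (rule memW[OF intw_uminus[OF q(2)] intw_plus[OF q(1) intw_comp[OF q(2) iC]], rotated])
  qed
  have invS: "\<forall>v\<in>W. \<psi> (c, True) *v v \<in> W"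
  proof
    fix v assume "v \<in> W"
    then obtain Q1 Q1' where q: "intw r \<psi> Q1" "intw r \<psi> Q1'"
      and vw: "v = Q1 a + Q1' (X *v a)" unfolding W_def by blast
    have "S *v v = \<epsilon> *s Q1 a + \<epsilon> *s Q1' (Y *v a)" using sQ[OF q] vw by simp
    also have "\<dots> = (\<lambda>z. \<epsilon> *s Q1 z + \<epsilon> *s Q1' (C z)) a + (\<lambda>z. - (\<epsilon> *s Q1' z)) (X *v a)"
      using Ye intw_diff[OF q(2)] by (simp add: vector_ssub_ldistrib)
    finally have "S *v v = (\<lambda>z. \<epsilon> *s Q1 z + \<epsilon> *s Q1' (C z)) a + (\<lambda>z. - (\<epsilon> *s Q1' z)) (X *v a)" .
    then show "\<psi> (c, True) *v v \<in> W" unfolding S_def[symmetric]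
      by (rule memW[OF intw_plus[OF intw_scale[OF q(1)] intw_scale[OF intw_comp[OF q(2) iC]]] intw_uminus[OF intw_scale[OF q(2)]], rotated])
  qed
  have inv: "\<forall>g\<in>carrier (dihedral r). \<forall>v\<in>W. \<psi> g *v v \<in> W"
    by (rule inv_from_xs[OF rep r2 c invX invS])
  have "a \<in> W" by (rule memW[OF intw_id intw_0]) simp
  then have "W = UNIV" using irr sub inv a0 unfolding irreducible_rep_def by blast
  then obtain Q Q' where q: "intw r \<psi> Q" "intw r \<psi> Q'" and bq: "b = Q a + Q' (X *v a)"
    unfolding W_def by blast
  have "b = \<epsilon> *s (S *v b)" using sb ee by (simp add: S_def vector_smult_assoc)
  also have "\<dots> = Q a + Q' (Y *v a)" using sQ[OF q] bq ee
    by (simp add: vector_add_ldistrib vector_smult_assoc)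
  finally have b2: "b = Q a + Q' (Y *v a)" .
  define R where "R = (\<lambda>z. Q z + (1/2) *s Q' (C z))"
  have iR: "intw r \<psi> R" unfolding R_def by (rule intw_plus[OF q(1) intw_scale[OF intw_comp[OF q(2) iC]]])
  have "R a = b"
  proof -
    have "R a = Q a + (1/2) *s (Q' (X *v a) + Q' (Y *v a))"
      unfolding R_def C_def using intw_add[OF q(2)] by simp
    have hw: "(1/2) * (w + w) = w" for w :: 'k
    proof -
      have "w + w = 2 * w" by simp
      then show ?thesis using two by simp
    qed
    have "R a $ i = b $ i" for i
    proof -
      have e1: "R a $ i = Q a $ i + (1/2) * (Q' (X *v a) $ i + Q' (Y *v a) $ i)"
        using \<open>R a = _\<close> by simp
      have e2: "Q' (X *v a) $ i = b $ i - Q a $ i" "Q' (Y *v a) $ i = b $ i - Q a $ i"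
        using arg_cong[OF bq, of "\<lambda>v. v $ i"] arg_cong[OF b2, of "\<lambda>v. v $ i"] by simp_all
      have "R a $ i = Q a $ i + (1/2) * ((b $ i - Q a $ i) + (b $ i - Q a $ i))" by (simp only: e1 e2)
      also have "\<dots> = Q a $ i + (b $ i - Q a $ i)" by (simp only: hw)
      finally show ?thesis by simp
    qed
    then show ?thesis by (simp add: vec_eq_iff)
  qed
  then show ?thesis using iR by metis
qed


lemma neg_self: assumes two: "(2::'k::field) \<noteq> 0" and m: "(m::'k^'n) = - m" shows "m = 0"
proof -
  have "m $ i = 0" for i
  proof -
    have "m $ i = - (m $ i)" using arg_cong[OF m, of "\<lambda>v. v $ i"] by simp
    then have h: "m $ i + m $ i = 0" by (metis add.right_inverse)
    have "2 * m $ i = m $ i + m $ i" by (rule mult_2)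
    then have "2 * m $ i = 0" using h by (simp only:)
    then show ?thesis using two by simp
  qed
  then show ?thesis by (simp add: vec_eq_iff)
qed

lemma irr_univ: "irreducible_rep r \<psi> \<Longrightarrow> k_subspace W \<Longrightarrow> (\<forall>g\<in>carrier (dihedral r). \<forall>v\<in>W. \<psi> g *v v \<in> W)
  \<Longrightarrow> a \<in> W \<Longrightarrow> a \<noteq> 0 \<Longrightarrow> W = UNIV"
proof -
  assume irr: "irreducible_rep r \<psi>" and sub: "k_subspace W" and inv: "\<forall>g\<in>carrier (dihedral r). \<forall>v\<in>W. \<psi> g *v v \<in> W"
    and a: "a \<in> W" "a \<noteq> 0"
  have all: "\<forall>W. k_subspace W \<and> (\<forall>g\<in>carrier (dihedral r). \<forall>v\<in>W. \<psi> g *v v \<in> W) \<longrightarrow> W = {0} \<or> W = UNIV"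
    using irr unfolding irreducible_rep_def by (elim conjE)
  have "W = {0} \<or> W = UNIV" using all sub inv by blast
  then show "W = UNIV" using a by auto
qed

lemma mv_neg: "(A::'k::field^'n^'m) *v (- v) = - (A *v v)"
  by (simp add: matrix_vector_mult_def vec_eq_iff sum_negf)

lemma inv_from_gen:
  assumes rep: "dihedral_rep r \<psi>" and r0: "0 < r"
    and s: "s \<in> carrier (dihedral r)" and t: "t \<in> carrier (dihedral r)"
    and ss: "s \<otimes>\<^bsub>dihedral r\<^esub> s = (0, False)" and tt: "t \<otimes>\<^bsub>dihedral r\<^esub> t = (0, False)"
    and gen: "generate (dihedral r) {s, t} = carrier (dihedral r)"
    and hs: "\<forall>v\<in>W. \<psi> s *v v \<in> W" and ht: "\<forall>v\<in>W. \<psi> t *v v \<in> W"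
  shows "\<forall>g\<in>carrier (dihedral r). \<forall>v\<in>W. \<psi> g *v v \<in> W"
proof -
  interpret D: group "dihedral r" by (rule dihedral_group[OF r0])
  have "\<forall>v\<in>W. \<psi> g *v v \<in> W" if "g \<in> generate (dihedral r) {s, t}" for g
    using that
  proof (induction rule: generate.induct)
    case one then show ?case using rep by (simp add: d_one rep_one)
  next
    case (incl h) then show ?case using hs ht by auto
  next
    case (inv h)
    have "inv\<^bsub>dihedral r\<^esub> s = s" using D.inv_equality[of s s] ss s by (simp add: d_one)
    moreover have "inv\<^bsub>dihedral r\<^esub> t = t" using D.inv_equality[of t t] tt t by (simp add: d_one)
    ultimately show ?case using inv.hyps hs ht by (elim insertE) simp_all
  next
    case (eng h1 h2)
    have c: "h1 \<in> carrier (dihedral r)" "h2 \<in> carrier (dihedral r)"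
      using eng.hyps D.generate_in_carrier[of "{s, t}"] s t by auto
    show ?case
    proof
      fix v assume "v \<in> W"
      then have "\<psi> h1 *v (\<psi> h2 *v v) \<in> W" using eng.IH by blast
      then show "\<psi> (h1 \<otimes>\<^bsub>dihedral r\<^esub> h2) *v v \<in> W" by (simp only: rep_mult[OF rep c])
    qed
  qed
  then show ?thesis using gen by blast
qed

lemma lemmaF:
  fixes \<psi> :: "nat \<times> bool \<Rightarrow> 'k::field^'n^'n"
  assumes irr: "irreducible_rep r \<psi>" and r2: "2 \<le> r" and c: "c < r"
    and two: "(2::'k) \<noteq> 0" and t: "t \<in> carrier (dihedral r)" and tt: "t \<otimes>\<^bsub>dihedral r\<^esub> t = (0, False)"
    and gen: "generate (dihedral r) {(c, True), t} = carrier (dihedral r)"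
    and sa: "\<psi> (c, True) *v a = a" and a0: "a \<noteq> 0" and sm: "\<psi> (c, True) *v m = - m"
  shows "\<exists>n. \<psi> t *v n = n \<and> n - \<psi> (c, True) *v n = m"
proof -
  have rep: "dihedral_rep r \<psi>" using irr by (simp add: irreducible_rep_def)
  have r0: "0 < r" using r2 by simp
  have sc: "(c, True) \<in> carrier (dihedral r)" using c by (simp add: dcarrier)
  have ss: "(c, True) \<otimes>\<^bsub>dihedral r\<^esub> (c, True) = (0, False)" using c by (simp add: dmult)
  define S where "S = \<psi> (c, True)"
  define Tt where "Tt = \<psi> t"
  have SS: "S *v (S *v v) = v" for v unfolding S_def using rep_invol[OF rep sc ss] .
  have TT: "Tt *v (Tt *v v) = v" for v unfolding Tt_def using rep_invol[OF rep t tt] .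
  show ?thesis
  proof (cases "m = 0")
    case True then show ?thesis by (intro exI[of _ 0]) simp
  next
    case m0: False
    show ?thesis
    proof (cases "\<exists>z. Tt *v z = z \<and> S *v z \<noteq> z")
      case True
      then obtain z where z: "Tt *v z = z" "S *v z \<noteq> z" by blast
      define n0 where "n0 = z - S *v z"
      have n00: "n0 \<noteq> 0" using z unfolding n0_def by simp
      have sn0: "\<psi> (c, True) *v n0 = (-1) *s n0"
        unfolding n0_def S_def[symmetric] using SS by (simp add: matrix_vector_mult_diff_distrib vector_sneg_minus1[symmetric])
      have sm': "\<psi> (c, True) *v m = (-1) *s m" using sm by (simp add: vector_sneg_minus1[symmetric])
      obtain R where R: "intw r \<psi> R" "m = R n0"
        using lemmaE[OF irr r2 c two _ sn0 sm' n00] by auto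
      show ?thesis
      proof (intro exI conjI)
        show "\<psi> t *v R z = R z" using intw_comm[OF R(1) t, of z] z(1) by (simp add: Tt_def)
        show "R z - \<psi> (c, True) *v R z = m"
          using intw_comm[OF R(1) sc, of z] intw_diff[OF R(1), of z "S *v z"] R(2)
          by (simp add: n0_def S_def)
      qed
    next
      case False
      then have H: "Tt *v z = z \<Longrightarrow> S *v z = z" for z by blast
      have subspace_lemma: "k_subspace {v. P v}" if "P 0" "\<And>v w. P v \<Longrightarrow> P w \<Longrightarrow> P (v + w)"
         "\<And>d v. P v \<Longrightarrow> P (d *s v)" for P :: "'k^'n \<Rightarrow> bool"
        using that unfolding k_subspace_def by auto
      show ?thesis
      proof (cases "\<exists>z. z \<noteq> 0 \<and> Tt *v z = z")
        case True
        then obtain z where z: "z \<noteq> 0" "Tt *v z = z" by blast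
        define U where "U = {v. S *v v = v \<and> Tt *v v = v}"
        have sub: "k_subspace U" unfolding U_def
          by (rule subspace_lemma) (auto simp: matrix_vector_right_distrib vector_scalar_commute)
        have inv: "\<forall>g\<in>carrier (dihedral r). \<forall>v\<in>U. \<psi> g *v v \<in> U"
          by (rule inv_from_gen[OF rep r0 sc t ss tt gen]) (auto simp: U_def S_def Tt_def)
        have "z \<in> U" using z H unfolding U_def by simp
        then have "U = UNIV" using irr_univ[OF irr sub inv _ z(1)] by blast
        then have "S *v m = m" unfolding U_def by auto
        then have "m = 0" using neg_self[OF two, of m] sm by (simp add: S_def)
        then show ?thesis using m0 by simp
      next
        case False
        have Tneg: "Tt *v v = - v" for v
        proof -
          have "Tt *v (v + Tt *v v) = v + Tt *v v" using TT by (simp add: matrix_vector_right_distrib add.commute)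
          then have "v + Tt *v v = 0" using False by blast
          then show ?thesis by (simp add: eq_neg_iff_add_eq_0 add.commute)
        qed
        define U where "U = {v. S *v v = v}"
        have sub: "k_subspace U" unfolding U_def
          by (rule subspace_lemma) (auto simp: matrix_vector_right_distrib vector_scalar_commute)
        have inv: "\<forall>g\<in>carrier (dihedral r). \<forall>v\<in>U. \<psi> g *v v \<in> U"
        proof (rule inv_from_gen[OF rep r0 sc t ss tt gen])
          show "\<forall>v\<in>U. \<psi> (c, True) *v v \<in> U" unfolding U_def S_def by simp
          show "\<forall>v\<in>U. \<psi> t *v v \<in> U" unfolding U_def S_def[symmetric] Tt_def[symmetric]
            using Tneg mv_neg[of S] by simp
        qed
        have "a \<in> U" using sa unfolding U_def S_def by simp
        then have "U = UNIV" using irr_univ[OF irr sub inv _ a0] by blast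
        then have "S *v m = m" unfolding U_def by auto
        then have "m = 0" using neg_self[OF two, of m] sm by (simp add: S_def)
        then show ?thesis using m0 by simp
      qed
    qed
  qed
qed


lemma smult: "(v1, v2, g) \<otimes>\<^bsub>semidirect r \<psi>1 \<psi>2\<^esub> (w1, w2, h) = (v1 + \<psi>1 g *v w1, v2 + \<psi>2 g *v w2, g \<otimes>\<^bsub>dihedral r\<^esub> h)"
  by (simp add: semidirect_def)

lemma s_one: "\<one>\<^bsub>semidirect r \<psi>1 \<psi>2\<^esub> = (0, 0, \<one>\<^bsub>dihedral r\<^esub>)"
  by (simp add: semidirect_def)

lemma s_carrier: "carrier (semidirect r \<psi>1 \<psi>2) = UNIV \<times> UNIV \<times> carrier (dihedral r)"
  by (simp add: semidirect_def)

lemma rep_one': "dihedral_rep r \<psi> \<Longrightarrow> \<psi> \<one>\<^bsub>dihedral r\<^esub> *v v = v"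
  by (simp add: dihedral_rep_def)

lemma semidirect_group:
  assumes rep1: "dihedral_rep r \<psi>1" and rep2: "dihedral_rep r \<psi>2" and r0: "0 < r"
  shows "group (semidirect r \<psi>1 \<psi>2)"
proof -
  interpret D: group "dihedral r" by (rule dihedral_group[OF r0])
  show ?thesis
  proof (rule groupI)
    fix x y assume "x \<in> carrier (semidirect r \<psi>1 \<psi>2)" "y \<in> carrier (semidirect r \<psi>1 \<psi>2)"
    then show "x \<otimes>\<^bsub>semidirect r \<psi>1 \<psi>2\<^esub> y \<in> carrier (semidirect r \<psi>1 \<psi>2)"
      by (cases x, cases y) (auto simp: smult s_carrier)
  next
    show "\<one>\<^bsub>semidirect r \<psi>1 \<psi>2\<^esub> \<in> carrier (semidirect r \<psi>1 \<psi>2)" by (simp add: s_one s_carrier)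
  next
    fix x y z assume xyz: "x \<in> carrier (semidirect r \<psi>1 \<psi>2)" "y \<in> carrier (semidirect r \<psi>1 \<psi>2)" "z \<in> carrier (semidirect r \<psi>1 \<psi>2)"
    obtain a1 a2 g where x: "x = (a1, a2, g)" by (cases x)
    obtain b1 b2 h where y: "y = (b1, b2, h)" by (cases y)
    obtain c1 c2 k where z: "z = (c1, c2, k)" by (cases z)
    have ghk: "g \<in> carrier (dihedral r)" "h \<in> carrier (dihedral r)" "k \<in> carrier (dihedral r)"
      using xyz x y z by (auto simp: s_carrier)
    show "x \<otimes>\<^bsub>semidirect r \<psi>1 \<psi>2\<^esub> y \<otimes>\<^bsub>semidirect r \<psi>1 \<psi>2\<^esub> z = x \<otimes>\<^bsub>semidirect r \<psi>1 \<psi>2\<^esub> (y \<otimes>\<^bsub>semidirect r \<psi>1 \<psi>2\<^esub> z)"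
      unfolding x y z smult
      using ghk rep_mult[OF rep1 ghk(1) ghk(2)] rep_mult[OF rep2 ghk(1) ghk(2)]
      by (simp add: matrix_vector_right_distrib D.m_assoc add.assoc)
  next
    fix x assume "x \<in> carrier (semidirect r \<psi>1 \<psi>2)"
    then show "\<one>\<^bsub>semidirect r \<psi>1 \<psi>2\<^esub> \<otimes>\<^bsub>semidirect r \<psi>1 \<psi>2\<^esub> x = x"
      by (cases x) (simp add: s_one smult s_carrier rep_one'[OF rep1] rep_one'[OF rep2])
  next
    fix x assume xc: "x \<in> carrier (semidirect r \<psi>1 \<psi>2)"
    obtain a1 a2 g where x: "x = (a1, a2, g)" by (cases x)
    have g: "g \<in> carrier (dihedral r)" using xc x by (simp add: s_carrier)
    define h where "h = inv\<^bsub>dihedral r\<^esub> g"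
    have h: "h \<in> carrier (dihedral r)" "h \<otimes>\<^bsub>dihedral r\<^esub> g = \<one>\<^bsub>dihedral r\<^esub>" using g by (simp_all add: h_def)
    show "\<exists>y\<in>carrier (semidirect r \<psi>1 \<psi>2). y \<otimes>\<^bsub>semidirect r \<psi>1 \<psi>2\<^esub> x = \<one>\<^bsub>semidirect r \<psi>1 \<psi>2\<^esub>"
      by (rule bexI[of _ "(- (\<psi>1 h *v a1), - (\<psi>2 h *v a2), h)"]) (simp_all add: x smult s_one s_carrier h)
  qed
qed

lemma comp3: "snd (snd (x \<otimes>\<^bsub>semidirect r \<psi>1 \<psi>2\<^esub> y)) = snd (snd x) \<otimes>\<^bsub>dihedral r\<^esub> snd (snd y)"
  by (cases x, cases y) (simp add: smult)

lemma pow3: "snd (snd (x [^]\<^bsub>semidirect r \<psi>1 \<psi>2\<^esub> (n::nat))) = snd (snd x) [^]\<^bsub>dihedral r\<^esub> n"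
  by (induction n) (simp_all add: s_one comp3)

lemma rot_pow: "0 < r \<Longrightarrow> (c, False) [^]\<^bsub>dihedral r\<^esub> (n::nat) = ((n * c) mod r, False)"
proof (induction n)
  case 0 then show ?case by (simp add: d_one)
next
  case (Suc n)
  then show ?case by (simp add: dmult mod_add_right_eq add.commute)
qed

lemma half_half: assumes two: "(2::'k::field) \<noteq> 0" shows "(1/2) *s v + (1/2) *s v = (v::'k^'n)"
proof -
  have "(1/2 :: 'k) + 1/2 = 1" using two by (simp add: add_divide_distrib[symmetric])
  then show ?thesis by (simp add: vector_sadd_rdistrib[symmetric])
qed

lemma central_not_gen:
  assumes r3: "3 \<le> r" and c: "c < r" and cc: "(c + c) mod r = 0"
    and t: "t \<in> carrier (dihedral r)" and tt: "t \<otimes>\<^bsub>dihedral r\<^esub> t = \<one>\<^bsub>dihedral r\<^esub>"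
  shows "generate (dihedral r) {(c, False), t} \<noteq> carrier (dihedral r)"
proof
  assume gen: "generate (dihedral r) {(c, False), t} = carrier (dihedral r)"
  have r0: "0 < r" using r3 by simp
  interpret D: group "dihedral r" by (rule dihedral_group[OF r0])
  define s where "s = (c, False)"
  have s: "s \<in> carrier (dihedral r)" using c by (simp add: s_def dcarrier)
  have ss: "s \<otimes>\<^bsub>dihedral r\<^esub> s = \<one>\<^bsub>dihedral r\<^esub>" using cc by (simp add: s_def dmult d_one)
  have c2: "c = 0 \<or> c + c = r"
  proof -
    obtain q where q: "c + c = r * q" using cc by (metis mod_eq_0_iff_dvd dvd_def)
    have "q < 2" using q c by (metis add_less_mono mult_2_right nat_mult_less_cancel_disj)
    then have "q = 0 \<or> q = 1" by auto
    then show ?thesis using q by auto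
  qed
  have ts: "t \<otimes>\<^bsub>dihedral r\<^esub> s = s \<otimes>\<^bsub>dihedral r\<^esub> t"
  proof -
    obtain b f where tb: "t = (b, f)" by (cases t)
    have b: "b < r" using t tb by (simp add: dcarrier)
    show ?thesis
    proof (cases f)
      case False then show ?thesis by (simp add: tb s_def dmult add.commute)
    next
      case True
      have "(b + (r - c)) mod r = (c + b) mod r"
        using c2
      proof
        assume "c = 0" then show ?thesis by simp
      next
        assume "c + c = r" then have "r - c = c" by simp
        then show ?thesis by (simp add: add.commute)
      qed
      then show ?thesis by (simp add: tb s_def dmult True)
    qed
  qed
  define X where "X = {\<one>\<^bsub>dihedral r\<^esub>, s, t, s \<otimes>\<^bsub>dihedral r\<^esub> t}"
  have sy: "s \<otimes>\<^bsub>dihedral r\<^esub> (s \<otimes>\<^bsub>dihedral r\<^esub> y) = y" if "y \<in> carrier (dihedral r)" for y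
    using that s ss by (simp add: D.m_assoc[symmetric])
  have ty: "t \<otimes>\<^bsub>dihedral r\<^esub> (t \<otimes>\<^bsub>dihedral r\<^esub> y) = y" if "y \<in> carrier (dihedral r)" for y
    using that t tt by (simp add: D.m_assoc[symmetric])
  have tsy: "t \<otimes>\<^bsub>dihedral r\<^esub> (s \<otimes>\<^bsub>dihedral r\<^esub> y) = s \<otimes>\<^bsub>dihedral r\<^esub> (t \<otimes>\<^bsub>dihedral r\<^esub> y)" if "y \<in> carrier (dihedral r)" for y
    using that s t ts by (simp add: D.m_assoc[symmetric])
  have closed: "a \<otimes>\<^bsub>dihedral r\<^esub> b \<in> X" if "a \<in> X" "b \<in> X" for a b
    using that s t unfolding X_def
    by (auto simp: D.m_assoc sy ty tsy ss tt ts)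
  have "x \<in> X" if "x \<in> generate (dihedral r) {s, t}" for x
    using that
  proof (induction rule: generate.induct)
    case one then show ?case by (simp add: X_def)
  next
    case (incl h) then show ?case by (auto simp: X_def)
  next
    case (inv h)
    have "inv\<^bsub>dihedral r\<^esub> s = s" using D.inv_equality[of s s] ss s by simp
    moreover have "inv\<^bsub>dihedral r\<^esub> t = t" using D.inv_equality[of t t] tt t by simp
    ultimately show ?case using inv.hyps by (auto simp: X_def)
  next
    case (eng h1 h2) then show ?case using closed by blast
  qed
  moreover have "generate (dihedral r) {s, t} = carrier (dihedral r)" using gen by (simp add: s_def)
  ultimately have sub: "carrier (dihedral r) \<subseteq> X" by blast
  have "card X \<le> 4"
  proof -
    have "X = set [\<one>\<^bsub>dihedral r\<^esub>, s, t, s \<otimes>\<^bsub>dihedral r\<^esub> t]" by (simp add: X_def)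
    then show ?thesis using card_length[of "[\<one>\<^bsub>dihedral r\<^esub>, s, t, s \<otimes>\<^bsub>dihedral r\<^esub> t]"] by simp
  qed
  moreover have "card (carrier (dihedral r)) \<le> card X"
    by (rule card_mono[OF _ sub]) (simp add: X_def)
  ultimately show False using card_D[of r] r3 by simp
qed


lemma two_nz:
  assumes p: "prime p" "odd p" and card: "CARD('k::field) = p"
  shows "(2::'k) \<noteq> 0"
proof
  assume h: "(2::'k) = 0"
  have "CHAR('k) dvd p" using CHAR_dvd_CARD[where 'a='k] card by simp
  moreover have "\<forall>m. m dvd p \<longrightarrow> m = 1 \<or> m = p" using p(1) by (simp add: prime_nat_iff)
  ultimately have "CHAR('k) = 1 \<or> CHAR('k) = p" by (elim allE[of _ "CHAR('k)"] impE)
  then have cp: "CHAR('k) = p" using CHAR_not_1[where 'a='k] by (elim disjE) simp_all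
  have "of_nat 2 = (0::'k)" using h by simp
  then have "CHAR('k) dvd 2" by (simp only: of_nat_eq_0_iff_char_dvd)
  then have "p dvd 2" using cp by simp
  then have "p \<le> 2" by (rule dvd_imp_le) simp
  moreover have "p \<ge> 2" using p(1) by (rule prime_ge_2_nat)
  ultimately have "p = 2" by (rule antisym)
  then show False using p(2) by simp
qed


lemma pow2: "group G \<Longrightarrow> x \<in> carrier G \<Longrightarrow> x [^]\<^bsub>G\<^esub> (2::nat) = x \<otimes>\<^bsub>G\<^esub> x"
  by (simp add: numeral_2_eq_2 group.is_monoid monoid.l_one)

theorem lemma6p4:
  fixes p r :: nat
    and \<psi>1 :: "nat \<times> bool \<Rightarrow> 'k::{field,finite} ^'n1 ^'n1"
    and \<psi>2 :: "nat \<times> bool \<Rightarrow> 'k ^'n2 ^'n2"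
    and \<rho> \<tau> :: "('k^'n1) \<times> ('k^'n2) \<times> (nat \<times> bool)"
  assumes "prime p" and "odd p" and "CARD('k) = p"
    and "r \<ge> 3" and "\<not> p dvd r"
    and "irreducible_rep r \<psi>1" and "irreducible_rep r \<psi>2"
    and "rotary_pair (semidirect r \<psi>1 \<psi>2) \<rho> \<tau>"
    and "group.ord (semidirect r \<psi>1 \<psi>2) \<rho> = 2 * p"
    and "group.ord (semidirect r \<psi>1 \<psi>2) \<tau> = 2"
  shows "\<not> rep_iso r \<psi>1 \<psi>2"
proof
  assume iso: "rep_iso r \<psi>1 \<psi>2"
  note irr1 = assms(6) and irr2 = assms(7)
  have r0: "0 < r" and r2: "2 \<le> r" and r3: "3 \<le> r" using assms(4) by auto
  have rep1: "dihedral_rep r \<psi>1" using irr1 by (simp add: irreducible_rep_def)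
  have rep2: "dihedral_rep r \<psi>2" using irr2 by (simp add: irreducible_rep_def)
  have two: "(2::'k) \<noteq> 0" by (rule two_nz[OF assms(1,2,3)])
  have p2: "2 \<le> p" using assms(1) by (rule prime_ge_2_nat)
  interpret D: group "dihedral r" by (rule dihedral_group[OF r0])
  have Ggrp: "group (semidirect r \<psi>1 \<psi>2)" by (rule semidirect_group[OF rep1 rep2 r0])
  interpret G: group "semidirect r \<psi>1 \<psi>2" by (rule Ggrp)
  have \<rho>c: "\<rho> \<in> carrier (semidirect r \<psi>1 \<psi>2)" and \<tau>c: "\<tau> \<in> carrier (semidirect r \<psi>1 \<psi>2)"
    and genG: "generate (semidirect r \<psi>1 \<psi>2) {\<rho>, \<tau>} = carrier (semidirect r \<psi>1 \<psi>2)"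
    using assms(8) by (simp_all add: rotary_pair_def)
  obtain u1 u2 s where \<rho>e: "\<rho> = (u1, u2, s)" by (cases \<rho>)
  obtain w1 w2 t where \<tau>e: "\<tau> = (w1, w2, t)" by (cases \<tau>)
  have sc: "s \<in> carrier (dihedral r)" using \<rho>c \<rho>e by (simp add: s_carrier)
  have tc: "t \<in> carrier (dihedral r)" using \<tau>c \<tau>e by (simp add: s_carrier)
  have \<rho>2: "\<rho> [^]\<^bsub>semidirect r \<psi>1 \<psi>2\<^esub> (2::nat) \<noteq> \<one>\<^bsub>semidirect r \<psi>1 \<psi>2\<^esub>"
  proof
    assume "\<rho> [^]\<^bsub>semidirect r \<psi>1 \<psi>2\<^esub> (2::nat) = \<one>\<^bsub>semidirect r \<psi>1 \<psi>2\<^esub>"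
    then have "2 * p dvd 2" using G.pow_eq_id[OF \<rho>c, of 2] assms(9) by simp
    then show False using p2 by (auto dest: dvd_imp_le)
  qed
  have \<rho>2p: "\<rho> [^]\<^bsub>semidirect r \<psi>1 \<psi>2\<^esub> (2 * p) = \<one>\<^bsub>semidirect r \<psi>1 \<psi>2\<^esub>"
    using G.pow_eq_id[OF \<rho>c, of "2 * p"] assms(9) by simp
  have \<tau>2: "\<tau> [^]\<^bsub>semidirect r \<psi>1 \<psi>2\<^esub> (2::nat) = \<one>\<^bsub>semidirect r \<psi>1 \<psi>2\<^esub>"
    using G.pow_eq_id[OF \<tau>c, of 2] assms(10) by simp
  have \<rho>\<rho>: "(u1 + \<psi>1 s *v u1, u2 + \<psi>2 s *v u2, s \<otimes>\<^bsub>dihedral r\<^esub> s) \<noteq> (0, 0, \<one>\<^bsub>dihedral r\<^esub>)"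
  proof -
    have "\<rho> \<otimes>\<^bsub>semidirect r \<psi>1 \<psi>2\<^esub> \<rho> \<noteq> \<one>\<^bsub>semidirect r \<psi>1 \<psi>2\<^esub>" using \<rho>2 pow2[OF Ggrp \<rho>c] by simp
    then show ?thesis unfolding \<rho>e smult s_one .
  qed
  have \<tau>\<tau>: "(w1 + \<psi>1 t *v w1, w2 + \<psi>2 t *v w2, t \<otimes>\<^bsub>dihedral r\<^esub> t) = (0, 0, \<one>\<^bsub>dihedral r\<^esub>)"
  proof -
    have "\<tau> \<otimes>\<^bsub>semidirect r \<psi>1 \<psi>2\<^esub> \<tau> = \<one>\<^bsub>semidirect r \<psi>1 \<psi>2\<^esub>" using \<tau>2 pow2[OF Ggrp \<tau>c] by simp
    then show ?thesis unfolding \<tau>e smult s_one .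
  qed
  have tt: "t \<otimes>\<^bsub>dihedral r\<^esub> t = (0, False)" using \<tau>\<tau> by (simp add: d_one)
  have s2p: "s [^]\<^bsub>dihedral r\<^esub> (2 * p) = \<one>\<^bsub>dihedral r\<^esub>"
    using arg_cong[OF \<rho>2p, of "\<lambda>x. snd (snd x)"] unfolding pow3 by (simp add: \<rho>e s_one)
  have inv3: "snd (snd (inv\<^bsub>semidirect r \<psi>1 \<psi>2\<^esub> x)) = inv\<^bsub>dihedral r\<^esub> (snd (snd x))"
    if xc: "x \<in> carrier (semidirect r \<psi>1 \<psi>2)" for x
  proof -
    have "inv\<^bsub>semidirect r \<psi>1 \<psi>2\<^esub> x \<otimes>\<^bsub>semidirect r \<psi>1 \<psi>2\<^esub> x = \<one>\<^bsub>semidirect r \<psi>1 \<psi>2\<^esub>"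
      using xc by simp
    then have e: "snd (snd (inv\<^bsub>semidirect r \<psi>1 \<psi>2\<^esub> x)) \<otimes>\<^bsub>dihedral r\<^esub> snd (snd x) = \<one>\<^bsub>dihedral r\<^esub>"
      using arg_cong[of _ _ "\<lambda>x. snd (snd x)"] comp3 by (metis s_one snd_conv)
    have c1: "snd (snd (inv\<^bsub>semidirect r \<psi>1 \<psi>2\<^esub> x)) \<in> carrier (dihedral r)"
      using G.inv_closed[OF xc] by (auto simp: s_carrier)
    have c2: "snd (snd x) \<in> carrier (dihedral r)" using xc by (auto simp: s_carrier)
    show ?thesis using D.inv_equality[OF e c2 c1] by simp
  qed
  have genD: "generate (dihedral r) {s, t} = carrier (dihedral r)"
  proof
    show "generate (dihedral r) {s, t} \<subseteq> carrier (dihedral r)"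
      using D.generate_in_carrier[of "{s, t}"] sc tc by blast
    have "snd (snd x) \<in> generate (dihedral r) {s, t}" if "x \<in> generate (semidirect r \<psi>1 \<psi>2) {\<rho>, \<tau>}" for x
      using that
    proof (induction rule: generate.induct)
      case one then show ?case by (simp add: s_one generate.one)
    next
      case (incl h) then show ?case using \<rho>e \<tau>e by (auto intro: generate.incl)
    next
      case (inv h)
      then have "h \<in> carrier (semidirect r \<psi>1 \<psi>2)" using \<rho>c \<tau>c by auto
      then have "snd (snd (inv\<^bsub>semidirect r \<psi>1 \<psi>2\<^esub> h)) = inv\<^bsub>dihedral r\<^esub> (snd (snd h))" by (rule inv3)
      moreover have "snd (snd h) \<in> {s, t}" using inv.hyps \<rho>e \<tau>e by auto
      ultimately show ?case by (simp add: generate.inv)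
    next
      case (eng h1 h2) then show ?case by (simp add: comp3 generate.eng)
    qed
    then show "carrier (dihedral r) \<subseteq> generate (dihedral r) {s, t}"
      using genG by (force simp: s_carrier)
  qed
  obtain c e where se: "s = (c, e)" by (cases s)
  have c: "c < r" using sc se by (simp add: dcarrier)
  have eT: "e = True"
  proof (rule ccontr)
    assume "e \<noteq> True"
    then have eF: "s = (c, False)" using se by simp
    have "(2 * p * c) mod r = 0" using s2p unfolding eF rot_pow[OF r0] by (simp add: d_one)
    then have "r dvd 2 * p * c" by (rule mod_0_imp_dvd)
    moreover have "2 * p * c = p * (2 * c)" by simp
    ultimately have "r dvd p * (2 * c)" by simp
    moreover have "coprime r p" using assms(1,5) by (simp add: prime_imp_coprime_nat coprime_commute)
    ultimately have "r dvd 2 * c" using coprime_dvd_mult_right_iff by blast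
    then have "(c + c) mod r = 0" by (simp add: mult_2)
    then show False using central_not_gen[OF r3 c _ tc] genD tt eF by (simp add: d_one)
  qed
  have ss: "s \<otimes>\<^bsub>dihedral r\<^esub> s = (0, False)" using c by (simp add: se eT dmult)
  have s_eq: "s = (c, True)" using se eT by simp

  obtain T S where TS: "T ** S = mat 1" and ST: "S ** T = mat 1"
    and Tint: "\<forall>g\<in>carrier (dihedral r). T ** \<psi>1 g = \<psi>2 g ** T"
    using iso unfolding rep_iso_def by blast
  have STv: "S *v (T *v v) = v" for v using ST by (simp add: matrix_vector_mul_assoc)
  have TSv: "T *v (S *v v) = v" for v using TS by (simp add: matrix_vector_mul_assoc)
  have Sint: "S *v (\<psi>2 g *v v) = \<psi>1 g *v (S *v v)" if g: "g \<in> carrier (dihedral r)" for g v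
  proof -
    have "S ** \<psi>2 g = S ** \<psi>2 g ** (T ** S)" using TS by simp
    also have "\<dots> = S ** (\<psi>2 g ** T) ** S" by (simp add: matrix_mul_assoc)
    also have "\<dots> = S ** (T ** \<psi>1 g) ** S" using Tint g by simp
    also have "\<dots> = (S ** T) ** \<psi>1 g ** S" by (simp add: matrix_mul_assoc)
    also have "\<dots> = \<psi>1 g ** S" using ST by simp
    finally show ?thesis by (simp add: matrix_vector_mul_assoc)
  qed
  have Sadd: "S *v (v + w) = S *v v + S *v w" for v w by (simp add: matrix_vector_right_distrib)
  define a1 where "a1 = u1 + \<psi>1 s *v u1"
  define b2 where "b2 = u2 + \<psi>2 s *v u2"
  define a2 where "a2 = S *v b2"
  have ab: "a1 \<noteq> 0 \<or> b2 \<noteq> 0" using \<rho>\<rho> ss by (auto simp: a1_def b2_def d_one)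
  have inv1: "\<psi>1 s *v (\<psi>1 s *v v) = v" for v by (rule rep_invol[OF rep1 sc ss])
  have inv2: "\<psi>2 s *v (\<psi>2 s *v v) = v" for v by (rule rep_invol[OF rep2 sc ss])
  have sa1: "\<psi>1 s *v a1 = a1" unfolding a1_def using inv1 by (simp add: matrix_vector_right_distrib add.commute)
  have sb2: "\<psi>2 s *v b2 = b2" unfolding b2_def using inv2 by (simp add: matrix_vector_right_distrib add.commute)
  have sa2: "\<psi>1 s *v a2 = a2" unfolding a2_def using Sint[OF sc, of b2] sb2 by simp
  obtain v0 :: "'k^'n1" where v0: "v0 \<noteq> 0" using irr1 unfolding irreducible_rep_def by blast
  obtain a where a: "a \<noteq> 0" "\<psi>1 s *v a = a"
  proof (cases "a1 = 0")
    case True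
    then have "b2 \<noteq> 0" using ab by simp
    then have "a2 \<noteq> 0" unfolding a2_def using TSv[of b2] by auto
    then show ?thesis using that sa2 by blast
  next
    case False then show ?thesis using that sa1 by blast
  qed
  obtain A :: "'k^'n1 \<Rightarrow> 'k^'n1" and B :: "'k^'n2 \<Rightarrow> 'k^'n1"
    where iA: "intw r \<psi>1 A"
      and Badd: "\<And>v w. B (v + w) = B v + B w"
      and Bcomm: "\<And>g v. g \<in> carrier (dihedral r) \<Longrightarrow> B (\<psi>2 g *v v) = \<psi>1 g *v B v"
      and ABab: "A a1 + B b2 = 0"
      and nz: "\<exists>y1 y2. A y1 + B y2 \<noteq> 0"
  proof (cases "a1 = 0")
    case True
    show ?thesis
    proof (rule that[of "\<lambda>v. v" "\<lambda>v. 0"])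
      show "intw r \<psi>1 (\<lambda>v. v)" by (rule intw_id)
      show "\<exists>y1 y2. y1 + (0::'k^'n1) \<noteq> 0" using v0 by auto
    qed (simp_all add: True)
  next
    case False
    have "\<psi>1 (c, True) *v a1 = 1 *s a1" "\<psi>1 (c, True) *v a2 = 1 *s a2" using sa1 sa2 s_eq by simp_all
    then obtain R where R: "intw r \<psi>1 R" "a2 = R a1"
      using lemmaE[OF irr1 r2 c two _ _ _ False] by blast
    show ?thesis
    proof (rule that[of R "\<lambda>v. - (S *v v)"])
      show "intw r \<psi>1 R" by (rule R(1))
      show "\<And>v w. - (S *v (v + w)) = - (S *v v) + - (S *v w)" by (simp add: Sadd)
      show "\<And>g v. g \<in> carrier (dihedral r) \<Longrightarrow> - (S *v (\<psi>2 g *v v)) = \<psi>1 g *v - (S *v v)"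
        by (simp add: Sint mv_neg)
      show "R a1 + - (S *v b2) = 0" using R(2) by (simp add: a2_def)
      have "R 0 + - (S *v (T *v v0)) \<noteq> 0" using STv v0 intw_zero[OF R(1)] by simp
      then show "\<exists>y1 y2. R y1 + - (S *v y2) \<noteq> 0" by blast
    qed
  qed
  define P where "P = (\<lambda>v1 v2. A v1 + B v2)"
  have Padd: "P (v1 + w1) (v2 + w2) = P v1 v2 + P w1 w2" for v1 v2 w1 w2
    unfolding P_def using intw_add[OF iA] Badd by (simp add: algebra_simps)
  have Pcomm: "P (\<psi>1 g *v v1) (\<psi>2 g *v v2) = \<psi>1 g *v P v1 v2" if "g \<in> carrier (dihedral r)" for g v1 v2
    unfolding P_def using intw_comm[OF iA that] Bcomm[OF that] by (simp add: matrix_vector_right_distrib)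
  have P00: "P 0 0 = 0"
  proof -
    have "P 0 0 = P 0 0 + P 0 0" using Padd[of 0 0 0 0] by simp
    then show ?thesis by simp
  qed
  define m where "m = P u1 u2"
  define f where "f = P w1 w2"
  have sm: "\<psi>1 s *v m = - m"
  proof -
    have "m + \<psi>1 s *v m = P a1 b2" unfolding m_def a1_def b2_def Padd Pcomm[OF sc] ..
    then have "m + \<psi>1 s *v m = 0" using ABab by (simp add: P_def)
    then show ?thesis by (simp add: eq_neg_iff_add_eq_0 add.commute)
  qed
  have tf: "\<psi>1 t *v f = - f"
  proof -
    have "f + \<psi>1 t *v f = P (w1 + \<psi>1 t *v w1) (w2 + \<psi>2 t *v w2)" unfolding f_def Padd Pcomm[OF tc] ..
    then have "f + \<psi>1 t *v f = 0" using \<tau>\<tau> P00 by simp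
    then show ?thesis by (simp add: eq_neg_iff_add_eq_0 add.commute)
  qed
  define m' where "m' = m - (1/2) *s (f - \<psi>1 s *v f)"
  have sm': "\<psi>1 (c, True) *v m' = - m'"
    unfolding m'_def s_eq[symmetric] using sm inv1[of f]
    by (simp add: matrix_vector_mult_diff_distrib vector_scalar_commute vector_ssub_ldistrib algebra_simps)
  have genD': "generate (dihedral r) {(c, True), t} = carrier (dihedral r)" using genD s_eq by simp
  have sa': "\<psi>1 (c, True) *v a = a" using a s_eq by simp
  obtain n' where n': "\<psi>1 t *v n' = n'" "n' - \<psi>1 (c, True) *v n' = m'"
    using lemmaF[OF irr1 r2 c two tc tt genD' sa' a(1) sm'] by blast
  define n where "n = (1/2) *s f + n'"
  have eq\<tau>: "P w1 w2 = n - \<psi>1 t *v n"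
  proof -
    have "n - \<psi>1 t *v n = (1/2) *s f + (1/2) *s f"
      unfolding n_def using n'(1) tf
      by (simp add: matrix_vector_right_distrib vector_scalar_commute vector_smult_rneg)
    also have "\<dots> = f" by (rule half_half[OF two])
    finally show ?thesis by (simp add: f_def)
  qed
  have eq\<rho>: "P u1 u2 = n - \<psi>1 s *v n"
  proof -
    have "n - \<psi>1 s *v n = (1/2) *s f - (1/2) *s (\<psi>1 s *v f) + (n' - \<psi>1 s *v n')"
      unfolding n_def by (simp add: matrix_vector_right_distrib vector_scalar_commute)
    also have "\<dots> = m" using n'(2) s_eq unfolding m'_def by (simp add: vector_ssub_ldistrib)
    finally show ?thesis by (simp add: m_def)
  qed
  define K where "K = {x. snd (snd x) \<in> carrier (dihedral r) \<and> P (fst x) (fst (snd x)) = n - \<psi>1 (snd (snd x)) *v n}"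
  have Kmult: "x \<otimes>\<^bsub>semidirect r \<psi>1 \<psi>2\<^esub> y \<in> K" if "x \<in> K" "y \<in> K" for x y
  proof -
    obtain v1 v2 g where x: "x = (v1, v2, g)" by (cases x)
    obtain y1 y2 h where y: "y = (y1, y2, h)" by (cases y)
    have g: "g \<in> carrier (dihedral r)" and h: "h \<in> carrier (dihedral r)"
      and Px: "P v1 v2 = n - \<psi>1 g *v n" and Py: "P y1 y2 = n - \<psi>1 h *v n"
      using that x y by (auto simp: K_def)
    have "P (v1 + \<psi>1 g *v y1) (v2 + \<psi>2 g *v y2) = n - \<psi>1 g *v n + \<psi>1 g *v (n - \<psi>1 h *v n)"
      by (simp only: Padd Pcomm[OF g] Px Py)
    also have "\<dots> = n - \<psi>1 (g \<otimes>\<^bsub>dihedral r\<^esub> h) *v n"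
      using rep_mult[OF rep1 g h, of n] by (simp add: matrix_vector_mult_diff_distrib)
    finally show ?thesis using g h by (simp add: K_def x y smult)
  qed
  have Kone: "\<one>\<^bsub>semidirect r \<psi>1 \<psi>2\<^esub> \<in> K"
    by (simp add: K_def s_one P00 rep_one'[OF rep1])
  have Kpow: "x [^]\<^bsub>semidirect r \<psi>1 \<psi>2\<^esub> (k::nat) \<in> K" if "x \<in> K" for x k
    by (induction k) (simp_all add: Kone Kmult that)
  have \<rho>K: "\<rho> \<in> K" using eq\<rho> sc by (simp add: K_def \<rho>e)
  have \<tau>K: "\<tau> \<in> K" using eq\<tau> tc by (simp add: K_def \<tau>e)
  have inv\<rho>: "inv\<^bsub>semidirect r \<psi>1 \<psi>2\<^esub> \<rho> \<in> K"
  proof -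
    have "\<rho> [^]\<^bsub>semidirect r \<psi>1 \<psi>2\<^esub> (2 * p - 1) \<otimes>\<^bsub>semidirect r \<psi>1 \<psi>2\<^esub> \<rho> = \<rho> [^]\<^bsub>semidirect r \<psi>1 \<psi>2\<^esub> Suc (2 * p - 1)"
      by simp
    also have "Suc (2 * p - 1) = 2 * p" using p2 by simp
    finally have "\<rho> [^]\<^bsub>semidirect r \<psi>1 \<psi>2\<^esub> (2 * p - 1) \<otimes>\<^bsub>semidirect r \<psi>1 \<psi>2\<^esub> \<rho> = \<one>\<^bsub>semidirect r \<psi>1 \<psi>2\<^esub>"
      using \<rho>2p by simp
    then have "inv\<^bsub>semidirect r \<psi>1 \<psi>2\<^esub> \<rho> = \<rho> [^]\<^bsub>semidirect r \<psi>1 \<psi>2\<^esub> (2 * p - 1)"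
      using G.inv_equality \<rho>c by simp
    then show ?thesis using Kpow[OF \<rho>K] by simp
  qed
  have inv\<tau>: "inv\<^bsub>semidirect r \<psi>1 \<psi>2\<^esub> \<tau> \<in> K"
  proof -
    have "\<tau> \<otimes>\<^bsub>semidirect r \<psi>1 \<psi>2\<^esub> \<tau> = \<one>\<^bsub>semidirect r \<psi>1 \<psi>2\<^esub>" using \<tau>2 pow2[OF Ggrp \<tau>c] by simp
    then have "inv\<^bsub>semidirect r \<psi>1 \<psi>2\<^esub> \<tau> = \<tau>" using G.inv_equality \<tau>c by simp
    then show ?thesis using \<tau>K by simp
  qed
  have "x \<in> K" if "x \<in> generate (semidirect r \<psi>1 \<psi>2) {\<rho>, \<tau>}" for x
    using that
  proof (induction rule: generate.induct)
    case one then show ?case by (rule Kone)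
  next
    case (incl h) then show ?case using \<rho>K \<tau>K by auto
  next
    case (inv h) then show ?case using inv\<rho> inv\<tau> by auto
  next
    case (eng h1 h2) then show ?case using Kmult by blast
  qed
  then have allK: "carrier (semidirect r \<psi>1 \<psi>2) \<subseteq> K" using genG by blast
  obtain y1 y2 where y: "P y1 y2 \<noteq> 0" using nz unfolding P_def by blast
  have "(y1, y2, \<one>\<^bsub>dihedral r\<^esub>) \<in> carrier (semidirect r \<psi>1 \<psi>2)" by (simp add: s_carrier)
  then have "(y1, y2, \<one>\<^bsub>dihedral r\<^esub>) \<in> K" using allK by blast
  then have "P y1 y2 = 0" by (simp add: K_def rep_one'[OF rep1])
  then show False using y by simp
qed

end
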